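(* Let $\mathbb F\in\{\mathbb R,\mathbb C\}$ and $A,B\in M_n(\mathbb F)$ with $\|A+B\|_2<\|A\|_2+\|B\|_2$. Then $\mathcal M_{\mathbb F}(\exp(A)\exp(B))<\|A\|_2+\|B\|_2$.
   Context: $\|\cdot\|_2$ is the operator norm. For $\mathbb F\in\{\mathbb R,\mathbb C\}$ and $A\in M_n(\mathbb F)$, the Magnus exponent is $\mathcal M_{\mathbb F}(A)=\inf\{\sum_{i=1}^k\|B_i\|_2 : k\ge1,\ B_i\in M_n(\mathbb F),\ \exp(B_k)\cdots\exp(B_1)=A\}$. *)

theory Defs
  imports "HOL-Analysis.Analysis"
begin

text \<open>Square matrices over F (F = real or complex) are represented as 'a^'n^'n
  (n = CARD('n) arbitrary); the vector norm on 'a^'n is the Euclidean (l2) norm.\<close>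

definition opnorm2 :: "('a::real_normed_field)^'n^'n \<Rightarrow> real" where
  "opnorm2 A = onorm (\<lambda>x::'a^'n. A *v x)"

fun mpow :: "('a::semiring_1)^'n^'n \<Rightarrow> nat \<Rightarrow> 'a^'n^'n" where
  "mpow A 0 = mat 1"
| "mpow A (Suc k) = A ** mpow A k"

definition mexp :: "('a::real_normed_field)^'n^'n \<Rightarrow> 'a^'n^'n" where
  "mexp A = (\<Sum>k. (1 / fact k) *\<^sub>R mpow A k)"

text \<open>Product exp(B_k) ... exp(B_1) for the list [B_1, ..., B_k].\<close>
definition exp_prod :: "(('a::real_normed_field)^'n^'n) list \<Rightarrow> 'a^'n^'n" where
  "exp_prod Bs = fold (\<lambda>B P. mexp B ** P) Bs (mat 1)"

definition magnus :: "('a::real_normed_field)^'n^'n \<Rightarrow> real" where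
  "magnus A = Inf {sum_list (map opnorm2 Bs) | Bs. Bs \<noteq> [] \<and> exp_prod Bs = A}"

end

theory Submission imports Defs begin


lemma norm_vec_le_sum: "norm (x::'a::real_normed_vector^'n) \<le> (\<Sum>i\<in>UNIV. norm (x$i))"
  unfolding norm_vec_def by (rule L2_set_le_sum) auto

lemma mv_axis: "((A::'a::real_normed_field^'n^'m) *v axis j 1) $ i = A $ i $ j"
  by (simp add: matrix_vector_mult_def axis_def if_distrib cong: if_cong)

lemma vnth_le: "norm ((x::'a::real_normed_vector^'n) $ i) \<le> norm x"
  unfolding norm_vec_def by (rule member_le_L2_set) simp_all

lemma norm_axis1: "norm (axis j (1::'a::real_normed_field)) = 1"
  by (simp add: norm_vec_def axis_def L2_set_def if_distrib if_distribR cong: if_cong)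

type_synonym ('a,'n) M = "'a^'n^'n"

context fixes dummy :: "'a::{real_normed_field,euclidean_space}" begin end

lemma op_bl: "bounded_linear ((*v) (A::'a::{real_normed_field,euclidean_space}^'n^'m))"
  by simp

lemma opnorm2_ge0: "0 \<le> opnorm2 (A::'a::{real_normed_field,euclidean_space}^'n^'n)"
  unfolding opnorm2_def by (rule onorm_pos_le) simp

lemma opnorm2_mv: "norm (A *v x) \<le> opnorm2 (A::'a::{real_normed_field,euclidean_space}^'n^'n) * norm x"
  unfolding opnorm2_def by (rule onorm) simp

lemma entry_le_opnorm2: "norm (A $ i $ j) \<le> opnorm2 (A::'a::{real_normed_field,euclidean_space}^'n^'n)"
  using opnorm2_mv[of A "axis j 1"] vnth_le[of "A *v axis j 1" i]
  by (simp add: mv_axis norm_axis1)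

lemma norm_le_opnorm2: "norm (A::'a::{real_normed_field,euclidean_space}^'n^'n) \<le> real CARD('n) * real CARD('n) * opnorm2 A"
proof -
  have "norm A \<le> (\<Sum>i\<in>UNIV. norm (A$i))" by (rule norm_vec_le_sum)
  also have "\<dots> \<le> (\<Sum>i\<in>(UNIV::'n set). (\<Sum>j\<in>(UNIV::'n set). opnorm2 A))"
    by (intro sum_mono order_trans[OF norm_vec_le_sum] entry_le_opnorm2)
  finally show ?thesis by simp
qed

lemma opnorm2_le_norm: "opnorm2 (A::'a::{real_normed_field,euclidean_space}^'n^'n) \<le> real CARD('n) * real CARD('n) * norm A"
  unfolding opnorm2_def
proof (rule onorm_le)
  fix x :: "'a^'n"
  have "norm (A *v x) \<le> (\<Sum>i\<in>UNIV. norm ((A *v x)$i))" by (rule norm_vec_le_sum)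
  also have "\<dots> \<le> (\<Sum>i\<in>(UNIV::'n set). (\<Sum>j\<in>(UNIV::'n set). norm A * norm x))"
  proof (intro sum_mono)
    fix i
    have "norm ((A *v x)$i) = norm (\<Sum>j\<in>UNIV. A$i$j * x$j)" by (simp add: matrix_vector_mult_def)
    also have "\<dots> \<le> (\<Sum>j\<in>UNIV. norm (A$i$j * x$j))" by (rule norm_sum)
    also have "\<dots> \<le> (\<Sum>j\<in>(UNIV::'n set). norm A * norm x)"
    proof (intro sum_mono)
      fix j
      have "norm (A$i$j) \<le> norm A" using vnth_le[of A i] vnth_le[of "A$i" j] by linarith
      moreover have "norm (x$j) \<le> norm x" by (rule vnth_le)
      ultimately show "norm (A$i$j * x$j) \<le> norm A * norm x"
        by (simp add: norm_mult mult_mono')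
    qed
    finally show "norm ((A *v x)$i) \<le> (\<Sum>j\<in>(UNIV::'n set). norm A * norm x)" .
  qed
  finally show "norm (A *v x) \<le> real CARD('n) * real CARD('n) * norm A * norm x" by simp
qed

lemma opnorm2_eq0: "opnorm2 (A::'a::{real_normed_field,euclidean_space}^'n^'n) = 0 \<longleftrightarrow> A = 0"
proof
  assume "opnorm2 A = 0"
  hence "norm (A$i$j) \<le> 0" for i j using entry_le_opnorm2[of A i j] by simp
  thus "A = 0" by (simp add: vec_eq_iff)
qed (simp add: opnorm2_def onorm_zero)

lemma opnorm2_add: "opnorm2 ((A::'a::{real_normed_field,euclidean_space}^'n^'n) + B) \<le> opnorm2 A + opnorm2 B"
proof -
  have "(\<lambda>x. (A + B) *v x) = (\<lambda>x. A *v x + B *v x)" by (simp add: fun_eq_iff matrix_vector_mult_add_rdistrib)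
  thus ?thesis unfolding opnorm2_def using onorm_triangle[OF op_bl[of A] op_bl[of B]] by simp
qed

lemma mv_scaleR: "(c *\<^sub>R (A::'a::{real_normed_field,euclidean_space}^'n^'m)) *v x = c *\<^sub>R (A *v x)"
  by (simp add: matrix_vector_mult_def vec_eq_iff scaleR_sum_right)

lemma opnorm2_scaleR: "opnorm2 (c *\<^sub>R (A::'a::{real_normed_field,euclidean_space}^'n^'n)) = \<bar>c\<bar> * opnorm2 A"
  unfolding opnorm2_def mv_scaleR by (rule onorm_scaleR) simp

lemma opnorm2_mult: "opnorm2 ((A::'a::{real_normed_field,euclidean_space}^'n^'n) ** B) \<le> opnorm2 A * opnorm2 B"
proof -
  have "(\<lambda>x. (A ** B) *v x) = ((*v) A) \<circ> ((*v) B)"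
    by (simp add: fun_eq_iff matrix_vector_mul_assoc)
  thus ?thesis unfolding opnorm2_def using onorm_compose[OF op_bl[of A] op_bl[of B]] by simp
qed

lemma opnorm2_one: "opnorm2 (mat 1 :: 'a::{real_normed_field,euclidean_space}^'n^'n) = 1"
proof -
  have "(*v) (mat 1 :: 'a^'n^'n) = (\<lambda>x. x)" by (simp add: fun_eq_iff)
  thus ?thesis unfolding opnorm2_def by (simp add: onorm_id)
qed



typedef ('a::"{real_normed_field,euclidean_space}", 'n::finite) sq = "UNIV :: ('a^'n^'n) set" by auto
setup_lifting type_definition_sq

instantiation sq :: ("{real_normed_field,euclidean_space}", finite) real_vector
begin
lift_definition zero_sq :: "('a,'b) sq" is "0 :: 'a^'b^'b" .
lift_definition plus_sq :: "('a,'b) sq \<Rightarrow> ('a,'b) sq \<Rightarrow> ('a,'b) sq" is "(+) :: 'a^'b^'b \<Rightarrow> _" .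
lift_definition minus_sq :: "('a,'b) sq \<Rightarrow> ('a,'b) sq \<Rightarrow> ('a,'b) sq" is "(-) :: 'a^'b^'b \<Rightarrow> _" .
lift_definition uminus_sq :: "('a,'b) sq \<Rightarrow> ('a,'b) sq" is "uminus :: 'a^'b^'b \<Rightarrow> _" .
lift_definition scaleR_sq :: "real \<Rightarrow> ('a,'b) sq \<Rightarrow> ('a,'b) sq" is "scaleR :: real \<Rightarrow> 'a^'b^'b \<Rightarrow> _" .
instance by standard (transfer, simp add: algebra_simps)+
end

instantiation sq :: ("{real_normed_field,euclidean_space}", finite) ring_1
begin
lift_definition one_sq :: "('a,'b) sq" is "mat 1 :: 'a^'b^'b" .
lift_definition times_sq :: "('a,'b) sq \<Rightarrow> ('a,'b) sq \<Rightarrow> ('a,'b) sq" is "(**) :: 'a^'b^'b \<Rightarrow> _" .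
instance
proof
  fix a b c :: "('a,'b) sq"
  show "a * b * c = a * (b * c)" by transfer (simp add: matrix_mul_assoc)
  show "1 * a = a" by transfer simp
  show "a * 1 = a" by transfer simp
  show "(a + b) * c = a * c + b * c" by transfer (vector matrix_matrix_mult_def sum.distrib[symmetric] field_simps)
  show "a * (b + c) = a * b + a * c" by transfer (simp add: matrix_add_ldistrib)
  show "(0::('a,'b) sq) \<noteq> 1"
  proof transfer
    have "(mat 1 :: 'a^'b^'b) $ i $ i = 1" for i by (simp add: mat_def)
    thus "(0::'a^'b^'b) \<noteq> mat 1" by (metis zero_index zero_neq_one)
  qed
qed
end

instance sq :: ("{real_normed_field,euclidean_space}", finite) real_algebra_1
proof
  fix a b :: "('a,'b) sq" and r :: real
  show "r *\<^sub>R a * b = r *\<^sub>R (a * b)" by transfer (simp add: scalar_matrix_assoc)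
  show "a * r *\<^sub>R b = r *\<^sub>R (a * b)" by transfer (simp add: matrix_scalar_ac scalar_matrix_assoc)
qed

instantiation sq :: ("{real_normed_field,euclidean_space}", finite) real_normed_algebra_1
begin
lift_definition norm_sq :: "('a,'b) sq \<Rightarrow> real" is opnorm2 .
definition dist_sq :: "('a,'b) sq \<Rightarrow> ('a,'b) sq \<Rightarrow> real" where "dist_sq a b = norm (a - b)"
definition sgn_sq :: "('a,'b) sq \<Rightarrow> ('a,'b) sq" where "sgn_sq x = scaleR (inverse (norm x)) x"
definition uniformity_sq :: "(('a,'b) sq \<times> ('a,'b) sq) filter" where
  "uniformity_sq = (INF e\<in>{0 <..}. principal {(x, y). dist x y < e})"
definition open_sq :: "('a,'b) sq set \<Rightarrow> bool" where
  "open_sq S = (\<forall>x\<in>S. \<forall>\<^sub>F (x', y) in uniformity. x' = x \<longrightarrow> y \<in> S)"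
instance
  apply standard
  unfolding dist_sq_def open_sq_def sgn_sq_def uniformity_sq_def
  apply (rule refl | (transfer, force simp: opnorm2_eq0 opnorm2_add opnorm2_scaleR opnorm2_one opnorm2_mult))+
  done
end

lemma Rep_bl: "bounded_linear (Rep_sq :: ('a::{real_normed_field,euclidean_space},'n::finite) sq \<Rightarrow> _)"
proof
  fix x y :: "('a,'n) sq" and r
  show "Rep_sq (x + y) = Rep_sq x + Rep_sq y" by transfer simp
  show "Rep_sq (r *\<^sub>R x) = r *\<^sub>R Rep_sq x" by transfer simp
  show "\<exists>K. \<forall>x::('a,'n) sq. norm (Rep_sq x) \<le> norm x * K"
    by (rule exI[of _ "real CARD('n) * real CARD('n)"], transfer) (metis norm_le_opnorm2 mult.commute)
qed

instance sq :: ("{real_normed_field,euclidean_space}", finite) banach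
proof
  fix X :: "nat \<Rightarrow> ('a,'b) sq"
  assume "Cauchy X"
  define C where "C = real CARD('b) * real CARD('b)"
  have C: "C > 0" by (simp add: C_def)
  have "Cauchy (\<lambda>n. Rep_sq (X n))"
  proof (rule CauchyI)
    fix e :: real assume "e > 0"
    then obtain M where M: "\<And>m n. m \<ge> M \<Longrightarrow> n \<ge> M \<Longrightarrow> norm (X m - X n) < e / C"
      using CauchyD[OF \<open>Cauchy X\<close>, of "e/C"] C by auto
    show "\<exists>M. \<forall>m\<ge>M. \<forall>n\<ge>M. norm (Rep_sq (X m) - Rep_sq (X n)) < e"
    proof (intro exI allI impI)
      fix m n assume "m \<ge> M" "n \<ge> M"
      have "norm (Rep_sq (X m) - Rep_sq (X n)) \<le> C * norm (X m - X n)"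
        unfolding C_def by transfer (rule norm_le_opnorm2)
      also have "\<dots> < C * (e / C)" using M[OF \<open>m\<ge>M\<close> \<open>n\<ge>M\<close>] C by (intro mult_strict_left_mono)
      finally show "norm (Rep_sq (X m) - Rep_sq (X n)) < e" using C by simp
    qed
  qed
  then obtain L where L: "(\<lambda>n. Rep_sq (X n)) \<longlonglongrightarrow> L" using convergent_eq_Cauchy by blast
  have "X \<longlonglongrightarrow> Abs_sq L"
  proof (rule LIMSEQ_I)
    fix e :: real assume "e > 0"
    then obtain N where N: "\<And>n. n \<ge> N \<Longrightarrow> norm (Rep_sq (X n) - L) < e / C"
      using LIMSEQ_D[OF L, of "e/C"] C by auto
    show "\<exists>N. \<forall>n\<ge>N. norm (X n - Abs_sq L) < e"
    proof (intro exI allI impI)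
      fix n assume "n \<ge> N"
      have "norm (X n - Abs_sq L) \<le> C * norm (Rep_sq (X n) - L)"
      proof -
        have "norm (X n - Abs_sq L) = opnorm2 (Rep_sq (X n) - L)"
          by (simp add: norm_sq_def minus_sq_def Abs_sq_inverse)
        thus ?thesis unfolding C_def using opnorm2_le_norm by metis
      qed
      also have "\<dots> < C * (e / C)" using N[OF \<open>n\<ge>N\<close>] C by (intro mult_strict_left_mono)
      finally show "norm (X n - Abs_sq L) < e" using C by simp
    qed
  qed
  thus "convergent X" by (auto simp: convergent_def)
qed



lemma exp_rem_sums:
  fixes x :: "'b::{real_normed_algebra_1,banach}"
  shows "(\<lambda>n. x^(n+2) /\<^sub>R fact (n+2)) sums (exp x - 1 - x)"
proof -
  define f where "f = (\<lambda>n. x^n /\<^sub>R fact n)"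
  have s: "(\<Sum>i<2. f i) = 1 + x" by (simp add: f_def eval_nat_numeral)
  have "(\<lambda>i. f (i+2)) sums (exp x - (\<Sum>i<2. f i))"
    using sums_iff_shift[of f 2 "exp x - (\<Sum>i<2. f i)"] exp_converges[of x] by (simp add: f_def)
  thus ?thesis using s by (simp add: f_def algebra_simps)
qed

lemma geo_bound:
  fixes f :: "nat \<Rightarrow> 'b::banach"
  assumes "f sums s" "0 \<le> q" "q < 1" "\<And>n. norm (f n) \<le> K * q^(n+1)"
  shows "norm s \<le> K * q / (1 - q)"
proof -
  have g: "(\<lambda>n. (K*q) * q^n) sums ((K*q) * (1 / (1 - q)))"
    by (rule sums_mult) (rule geometric_sums, use assms in simp)
  have gg: "(\<lambda>n. K * q^(n+1)) = (\<lambda>n. (K*q) * q^n)" by (simp add: fun_eq_iff)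
  have sn: "summable (\<lambda>n. norm (f n))"
    by (rule summable_comparison_test[of _ "\<lambda>n. K * q^(n+1)"]) (use assms g gg in \<open>auto simp: sums_iff\<close>)
  have "norm s = norm (suminf f)" using assms(1) by (simp add: sums_iff)
  also have "\<dots> \<le> (\<Sum>n. norm (f n))" by (rule summable_norm[OF sn])
  also have "\<dots> \<le> (\<Sum>n. K * q^(n+1))"
    by (rule suminf_le) (use assms sn g gg in \<open>auto simp: sums_iff\<close>)
  also have "\<dots> = K * q / (1 - q)" using g gg by (simp add: sums_iff)
  finally show ?thesis .
qed

lemma fact_ge_pow2: "2^(n+1) \<le> (fact (n+2) :: real)"
proof (induction n)
  case 0 then show ?case by (simp add: eval_nat_numeral)
next
  case (Suc n)
  have "fact (Suc n + 2) = (real (n+3)) * fact (n+2)"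
    by (simp add: fact_Suc algebra_simps eval_nat_numeral)
  also have "\<dots> \<ge> 2 * 2^(n+1)" using Suc by (intro mult_mono) auto
  finally show ?case by simp
qed

lemma norm_divR: "norm (y /\<^sub>R c) = norm (y::'b::real_normed_vector) / \<bar>c\<bar>"
  by (simp add: divide_inverse_commute)

lemma E1:
  fixes x :: "'b::{real_normed_algebra_1,banach}"
  assumes "norm x \<le> 1"
  shows "norm (exp x - 1 - x) \<le> norm x ^ 2"
proof -
  have "norm (exp x - 1 - x) \<le> norm x ^ 2 * (1/2) / (1 - 1/2)"
  proof (rule geo_bound[OF exp_rem_sums])
    fix n
    have "norm (x^(n+2) /\<^sub>R fact (n+2)) = norm (x^(n+2)) / fact (n+2)" by (simp only: norm_divR) simp
    also have "\<dots> \<le> norm x ^ 2 / fact (n+2)"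
    proof (intro divide_right_mono)
      have "norm (x^(n+2)) \<le> norm x ^ (n+2)" by (rule norm_power_ineq)
      also have "\<dots> = norm x ^ 2 * norm x ^ n" by (simp add: power_add mult.commute power2_eq_square)
      also have "\<dots> \<le> norm x ^ 2 * 1" using assms by (intro mult_left_mono power_le_one) auto
      finally show "norm (x^(n+2)) \<le> norm x ^ 2" by simp
    qed simp
    also have "\<dots> \<le> norm x ^ 2 / 2^(n+1)"
      by (intro divide_left_mono fact_ge_pow2) auto
    also have "\<dots> = norm x ^ 2 * (1/2)^(n+1)" by (simp add: power_divide)
    finally show "norm (x^(n+2) /\<^sub>R fact (n+2)) \<le> norm x ^ 2 * (1/2)^(n+1)" .
  qed auto
  thus ?thesis by simp
qed

lemma pow_diff_bound:
  fixes x y :: "'b::real_normed_algebra_1"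
  assumes "norm x \<le> r" "norm y \<le> r"
  shows "norm (x^(Suc n) - y^(Suc n)) \<le> real (Suc n) * r^n * norm (x - y)"
proof (induction n)
  case 0 then show ?case by simp
next
  case (Suc n)
  have r: "0 \<le> r" using assms(1) norm_ge_zero order_trans by blast
  have "x^(Suc (Suc n)) - y^(Suc (Suc n)) = x * (x^(Suc n) - y^(Suc n)) + (x - y) * y^(Suc n)"
    by (simp add: algebra_simps)
  hence "norm (x^(Suc (Suc n)) - y^(Suc (Suc n))) \<le> norm (x * (x^(Suc n) - y^(Suc n))) + norm ((x - y) * y^(Suc n))"
    by (simp only: norm_triangle_ineq)
  also have "\<dots> \<le> norm x * norm (x^(Suc n) - y^(Suc n)) + norm (x - y) * norm (y^(Suc n))"
    by (intro add_mono norm_mult_ineq)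
  also have "\<dots> \<le> r * (real (Suc n) * r^n * norm (x - y)) + norm (x - y) * r^(Suc n)"
  proof (intro add_mono mult_mono Suc.IH)
    show "norm (y ^ Suc n) \<le> r ^ Suc n"
      using norm_power_ineq[of y "Suc n"] power_mono[OF assms(2), of "Suc n"] by simp
  qed (use assms r in auto)
  also have "\<dots> = real (Suc (Suc n)) * r^(Suc n) * norm (x - y)" by (simp add: algebra_simps)
  finally show ?case .
qed

lemma E2:
  fixes x y :: "'b::{real_normed_algebra_1,banach}"
  assumes "norm x \<le> 1/4" "norm y \<le> 1/4"
  shows "norm ((exp x - 1 - x) - (exp y - 1 - y)) \<le> 1/3 * norm (x - y)"
proof -
  have s: "(\<lambda>n. (x^(n+2) - y^(n+2)) /\<^sub>R fact (n+2)) sums ((exp x - 1 - x) - (exp y - 1 - y))"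
    using sums_diff[OF exp_rem_sums[of x] exp_rem_sums[of y]] by (simp add: scaleR_diff_right)
  have "norm ((exp x - 1 - x) - (exp y - 1 - y)) \<le> norm (x - y) * (1/4) / (1 - 1/4)"
  proof (rule geo_bound[OF s])
    fix n
    have "norm ((x^(n+2) - y^(n+2)) /\<^sub>R fact (n+2)) = norm (x^(Suc (n+1)) - y^(Suc (n+1))) / fact (n+2)" by (simp only: norm_divR) simp
    also have "\<dots> \<le> (real (n+2) * (1/4)^(n+1) * norm (x - y)) / fact (n+2)"
      using pow_diff_bound[OF assms, of "n+1"] by (intro divide_right_mono) auto
    also have "\<dots> \<le> (fact (n+2) * (1/4)^(n+1) * norm (x - y)) / fact (n+2)"
    proof (intro divide_right_mono mult_right_mono)
      show "real (n+2) \<le> fact (n+2)" by (metis fact_ge_self of_nat_fact of_nat_le_iff)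
    qed auto
    also have "\<dots> = norm (x - y) * (1/4)^(n+1)" by simp
    finally show "norm ((x^(n+2) - y^(n+2)) /\<^sub>R fact (n+2)) \<le> norm (x - y) * (1/4)^(n+1)" .
  qed auto
  thus ?thesis by simp
qed


lemma E4:
  fixes X :: "'b::{real_normed_algebra_1,banach}"
  assumes X: "norm X \<le> 1/8"
  shows "\<exists>Z. exp Z = 1 + X \<and> norm Z \<le> norm X + 4 * norm X ^ 2"
proof -
  define \<rho> where "\<rho> = norm X"
  have \<rho>0: "0 \<le> \<rho>" by (simp add: \<rho>_def)
  define S where "S = cball (0::'b) (2*\<rho>)"
  define f where "f = (\<lambda>Z. X - (exp Z - 1 - Z))"
  have q4: "4*\<rho>^2 \<le> \<rho>"
  proof -
    have "\<rho>*\<rho> \<le> \<rho>*(1/8)" using mult_left_mono[of \<rho> "1/8" \<rho>] X \<rho>0 \<rho>_def by simp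
    moreover have "0 \<le> \<rho>*\<rho>" by simp
    ultimately show ?thesis unfolding power2_eq_square by linarith
  qed
  have inS: "Z \<in> S \<longleftrightarrow> norm Z \<le> 2*\<rho>" for Z by (simp add: S_def)
  have small: "norm Z \<le> 1/4" if "Z \<in> S" for Z using that inS X \<rho>_def by auto
  have fb: "norm (f Z) \<le> \<rho> + norm Z ^ 2" if "Z \<in> S" for Z
  proof -
    have "norm (f Z) \<le> norm X + norm (exp Z - 1 - Z)" unfolding f_def by (rule norm_triangle_ineq4)
    also have "\<dots> \<le> \<rho> + norm Z ^ 2" using E1[of Z] small[OF that] by (simp add: \<rho>_def)
    finally show ?thesis .
  qed
  have "\<exists>!Z\<in>S. f Z = Z"
  proof (rule Banach_fix)
    show "complete S" unfolding S_def by (simp add: complete_eq_closed)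
    show "S \<noteq> {}" using inS[of 0] \<rho>0 by auto
    show "f ` S \<subseteq> S"
    proof
      fix y assume "y \<in> f ` S"
      then obtain Z where Z: "Z \<in> S" "y = f Z" by auto
      have n: "norm Z \<le> 2*\<rho>" using Z inS by auto
      have "norm Z ^ 2 \<le> (2*\<rho>)^2" using n by (intro power_mono) auto
      hence "norm y \<le> \<rho> + 4*\<rho>^2" using fb[OF Z(1)] Z by (simp add: power_mult_distrib)
      also have "\<dots> \<le> 2*\<rho>" using q4 by simp
      finally show "y \<in> S" using inS by auto
    qed
    fix x y assume "x \<in> S" "y \<in> S"
    have "dist (f x) (f y) = norm ((exp y - 1 - y) - (exp x - 1 - x))"
      by (simp add: f_def dist_norm algebra_simps)
    also have "\<dots> \<le> 1/3 * norm (y - x)" using E2 small \<open>x\<in>S\<close> \<open>y\<in>S\<close> by blast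
    also have "\<dots> = 1/3 * dist x y" by (simp add: dist_norm norm_minus_commute)
    finally show "dist (f x) (f y) \<le> 1/3 * dist x y" .
  qed auto
  then obtain Z where Z: "Z \<in> S" "f Z = Z" by auto
  have e: "exp Z = 1 + X" using Z(2) unfolding f_def by (simp add: algebra_simps)
  have n: "norm Z \<le> 2*\<rho>" using Z inS by auto
  have "norm Z ^ 2 \<le> (2*\<rho>)^2" using n by (intro power_mono) auto
  hence "norm Z \<le> \<rho> + 4*\<rho>^2" using fb[OF Z(1)] Z(2) by (simp add: power_mult_distrib)
  thus ?thesis using e \<rho>_def by auto
qed

lemma E3:
  fixes A B :: "'b::{real_normed_algebra_1,banach}"
  assumes t: "0 \<le> t" "t * norm A \<le> 1" "t * norm B \<le> 1"
  shows "norm (exp (t *\<^sub>R A) * exp (t *\<^sub>R B) - 1 - t *\<^sub>R (A + B))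
           \<le> t^2 * (norm A ^ 2 + norm B ^ 2 + 4 * norm A * norm B)"
proof -
  define a where "a = norm A"
  define b where "b = norm B"
  have a0: "0 \<le> a" "0 \<le> b" by (simp_all add: a_def b_def)
  define R1 where "R1 = exp (t *\<^sub>R A) - 1 - t *\<^sub>R A"
  define R2 where "R2 = exp (t *\<^sub>R B) - 1 - t *\<^sub>R B"
  have nA: "norm (t *\<^sub>R A) = t * a" using t by (simp add: a_def)
  have nB: "norm (t *\<^sub>R B) = t * b" using t by (simp add: b_def)
  have r1: "norm R1 \<le> (t*a)^2" unfolding R1_def using E1[of "t *\<^sub>R A"] nA t a_def by simp
  have r2: "norm R2 \<le> (t*b)^2" unfolding R2_def using E1[of "t *\<^sub>R B"] nB t b_def by simp
  have ta1: "t*a \<le> 1" "0 \<le> t*a" using t a_def apply simp using t(1) a0(1) by (rule mult_nonneg_nonneg)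
  have tb1: "t*b \<le> 1" "0 \<le> t*b" using t b_def apply simp using t(1) a0(2) by (rule mult_nonneg_nonneg)
  have ta: "(t*a)^2 \<le> t*a" using ta1 by (simp add: power2_eq_square mult_left_le_one_le)
  have tb: "(t*b)^2 \<le> t*b" using tb1 by (simp add: power2_eq_square mult_left_le_one_le)
  have p: "norm (t *\<^sub>R A + R1) \<le> 2*(t*a)"
    using norm_triangle_ineq[of "t *\<^sub>R A" R1] nA r1 ta by linarith
  have q: "norm (t *\<^sub>R B + R2) \<le> 2*(t*b)"
    using norm_triangle_ineq[of "t *\<^sub>R B" R2] nB r2 tb by linarith
  have pq: "norm ((t *\<^sub>R A + R1) * (t *\<^sub>R B + R2)) \<le> (2*(t*a)) * (2*(t*b))"
    by (rule order_trans[OF norm_mult_ineq]) (intro mult_mono p q, use ta1 in auto)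
  have eq: "exp (t *\<^sub>R A) * exp (t *\<^sub>R B) - 1 - t *\<^sub>R (A + B) = R1 + R2 + (t *\<^sub>R A + R1) * (t *\<^sub>R B + R2)"
    unfolding R1_def R2_def by (simp add: algebra_simps)
  have "norm (R1 + R2 + (t *\<^sub>R A + R1) * (t *\<^sub>R B + R2)) \<le> norm R1 + norm R2 + norm ((t *\<^sub>R A + R1) * (t *\<^sub>R B + R2))"
    using norm_triangle_ineq[of "R1+R2" "(t *\<^sub>R A + R1) * (t *\<^sub>R B + R2)"] norm_triangle_ineq[of R1 R2] by linarith
  also have "\<dots> \<le> (t*a)^2 + (t*b)^2 + (2*(t*a)) * (2*(t*b))" using r1 r2 pq by linarith
  also have "\<dots> = t^2 * (a^2 + b^2 + 4*a*b)" by (simp add: algebra_simps power2_eq_square)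
  finally show ?thesis using eq a_def b_def by simp
qed



lemma core:
  fixes A B :: "'b::{real_normed_algebra_1,banach}"
  assumes h: "norm (A + B) < norm A + norm B"
  shows "\<exists>t Z. exp A * exp B = exp ((1-t) *\<^sub>R A) * (exp Z * exp ((1-t) *\<^sub>R B))
           \<and> (1-t) * norm A + norm Z + (1-t) * norm B < norm A + norm B \<and> 0 \<le> 1 - t"
proof -
  define a where "a = norm A"
  define b where "b = norm B"
  define c where "c = norm (A + B)"
  have a0: "0 \<le> a" "0 \<le> b" "0 \<le> c" by (simp_all add: a_def b_def c_def)
  define \<delta> where "\<delta> = a + b - c"
  have d0: "0 < \<delta>" using h by (simp add: \<delta>_def a_def b_def c_def)
  define K where "K = a^2 + b^2 + 4*a*b"
  have K0: "0 \<le> K" using a0 by (simp add: K_def)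
  define N where "N = 1 + a + b + c + K"
  have N1: "1 \<le> N" using a0 K0 by (simp add: N_def)
  have dN: "\<delta> \<le> N" using a0 K0 by (simp add: N_def \<delta>_def)
  define t where "t = \<delta> / (32 * N^2)"
  have t0: "0 < t" using d0 N1 by (simp add: t_def)
  have tN2: "32 * t * N^2 = \<delta>" using N1 by (simp add: t_def)
  have tNd: "t * N \<le> \<delta> / 32"
  proof -
    have "t * N * 1 \<le> t * N * N" using t0 N1 by (intro mult_left_mono) auto
    thus ?thesis using tN2 by (simp add: power2_eq_square algebra_simps)
  qed
  have tN: "t * N \<le> 1/32"
  proof -
    have "(32*t*N) * N \<le> 1 * N" using tN2 dN by (simp add: power2_eq_square algebra_simps)
    hence "32*t*N \<le> 1" using N1 by (simp add: mult_le_cancel_right)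
    thus ?thesis by simp
  qed
  have "t * 1 \<le> t * N" using t0 N1 by (intro mult_left_mono) auto
  hence t1: "t \<le> 1/32" using tN by simp
  have "t * a \<le> t * N" using t0 a0 K0 by (intro mult_left_mono) (auto simp: N_def)
  hence ta: "t * a \<le> 1" using tN by simp
  have "t * b \<le> t * N" using t0 a0 K0 by (intro mult_left_mono) (auto simp: N_def)
  hence tb: "t * b \<le> 1" using tN by simp
  have tc: "t * c \<le> t * N" using t0 a0 K0 by (intro mult_left_mono) (auto simp: N_def)
  have tK: "t * K \<le> t * N" using t0 a0 K0 by (intro mult_left_mono) (auto simp: N_def)
  define u where "u = t*c + t^2*K"
  have u0: "0 \<le> u" using t0 a0 K0 by (simp add: u_def)
  have tKN: "t^2 * K \<le> t * (t * N)" using tK t0 by (simp add: power2_eq_square mult.assoc mult_left_mono)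
  have ttN: "t * (t * N) \<le> t * N" using t1 t0 N1 by (simp add: mult_left_le_one_le)
  have u2: "u \<le> 2 * (t * N)" using tc tKN ttN by (simp add: u_def)
  have u8: "u \<le> 1/8" using u2 tN by simp
  define X where "X = exp (t *\<^sub>R A) * exp (t *\<^sub>R B) - 1"
  have e3: "norm (X - t *\<^sub>R (A + B)) \<le> t^2 * K"
    using E3[of t A B] t0 ta tb by (simp add: X_def K_def a_def b_def)
  have nX: "norm X \<le> u"
  proof -
    have "norm X \<le> norm (t *\<^sub>R (A + B)) + norm (X - t *\<^sub>R (A + B))"
      by (metis add.commute diff_add_cancel norm_triangle_ineq)
    also have "\<dots> \<le> t * c + t^2 * K" using e3 t0 by (simp add: c_def)
    finally show ?thesis by (simp add: u_def)
  qed
  obtain Z where Z: "exp Z = 1 + X" "norm Z \<le> norm X + 4 * norm X ^ 2"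
    using E4[of X] nX u8 by auto
  have nZ: "norm Z \<le> u + 4 * u^2"
  proof -
    have "norm X ^ 2 \<le> u^2" using nX by (intro power_mono) auto
    thus ?thesis using Z(2) nX by linarith
  qed
  have u4: "4 * u^2 \<le> t * \<delta> / 2"
  proof -
    have "u^2 \<le> (2 * (t * N))^2" using u2 u0 by (intro power_mono) auto
    also have "\<dots> = t * (4 * t * N^2)" by (simp add: power2_eq_square algebra_simps)
    also have "\<dots> = t * (\<delta> / 8)" using tN2 by simp
    finally show ?thesis by simp
  qed
  have "t * (t * N) \<le> t * (\<delta> / 32)" using tNd t0 by (intro mult_left_mono) auto
  hence tKd: "t^2 * K \<le> t * (\<delta> / 32)" using tKN by linarith
  have key: "u + 4 * u^2 < t * (a + b)"
  proof -
    have ue: "u = t*c + t^2*K" by (simp add: u_def)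
    have "u + 4 * u^2 \<le> t*c + t * (\<delta>/32) + t * \<delta> / 2" using u4 tKd ue by linarith
    also have "\<dots> < t*c + t * \<delta>" using t0 d0 by (simp add: algebra_simps)
    also have "\<dots> = t * (a + b)" by (simp add: \<delta>_def algebra_simps)
    finally show ?thesis .
  qed
  have eA: "exp A = exp ((1-t) *\<^sub>R A) * exp (t *\<^sub>R A)"
  proof -
    have "exp ((1-t) *\<^sub>R A + t *\<^sub>R A) = exp ((1-t) *\<^sub>R A) * exp (t *\<^sub>R A)"
      by (rule exp_add_commuting) (simp add: algebra_simps)
    moreover have "(1-t) *\<^sub>R A + t *\<^sub>R A = A" by (simp add: algebra_simps)
    ultimately show ?thesis by simp
  qed
  have eB: "exp B = exp (t *\<^sub>R B) * exp ((1-t) *\<^sub>R B)"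
  proof -
    have "exp (t *\<^sub>R B + (1-t) *\<^sub>R B) = exp (t *\<^sub>R B) * exp ((1-t) *\<^sub>R B)"
      by (rule exp_add_commuting) (simp add: algebra_simps)
    moreover have "t *\<^sub>R B + (1-t) *\<^sub>R B = B" by (simp add: algebra_simps)
    ultimately show ?thesis by simp
  qed
  have "exp A * exp B = exp ((1-t) *\<^sub>R A) * (exp Z * exp ((1-t) *\<^sub>R B))"
    unfolding eA eB Z(1) X_def by (simp add: mult.assoc)
  moreover have "(1-t) * norm A + norm Z + (1-t) * norm B < norm A + norm B"
    using nZ key by (simp add: a_def b_def algebra_simps)
  moreover have "0 \<le> 1 - t" using t1 by simp
  ultimately show ?thesis by blast
qed



lemma Rep_pow: "Rep_sq (x ^ n) = mpow (Rep_sq x) n"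
  by (induction n) (simp_all add: times_sq.rep_eq one_sq.rep_eq)

lemma mexp_Rep: "mexp (Rep_sq x) = Rep_sq (exp x)"
proof -
  have "(\<lambda>n. Rep_sq (x^n /\<^sub>R fact n)) sums Rep_sq (exp x)"
    by (rule bounded_linear.sums[OF Rep_bl exp_converges])
  moreover have "Rep_sq (x^n /\<^sub>R fact n) = (1 / fact n) *\<^sub>R mpow (Rep_sq x) n" for n
    by (simp add: scaleR_sq.rep_eq Rep_pow divide_inverse)
  ultimately have "(\<lambda>n. (1 / fact n) *\<^sub>R mpow (Rep_sq x) n) sums Rep_sq (exp x)" by simp
  thus ?thesis unfolding mexp_def by (rule sums_unique[symmetric])
qed

lemma main_gen:
  fixes A B :: "'a::{real_normed_field,euclidean_space}^'n::finite^'n"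
  assumes h: "opnorm2 (A + B) < opnorm2 A + opnorm2 B"
  shows "magnus (mexp A ** mexp B) < opnorm2 A + opnorm2 B"
proof -
  define a :: "('a,'n) sq" where "a = Abs_sq A"
  define b :: "('a,'n) sq" where "b = Abs_sq B"
  have RA: "Rep_sq a = A" "Rep_sq b = B" by (simp_all add: a_def b_def Abs_sq_inverse)
  have na: "norm a = opnorm2 A" "norm b = opnorm2 B" "norm (a + b) = opnorm2 (A + B)"
    by (simp_all add: norm_sq.rep_eq plus_sq.rep_eq RA)
  obtain t Z where tz: "exp a * exp b = exp ((1-t) *\<^sub>R a) * (exp Z * exp ((1-t) *\<^sub>R b))"
     "(1-t) * norm a + norm Z + (1-t) * norm b < norm a + norm b" "0 \<le> 1 - t"
    using core[of a b] h na by auto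
  define Bs where "Bs = [Rep_sq ((1-t) *\<^sub>R b), Rep_sq Z, Rep_sq ((1-t) *\<^sub>R a)]"
  have "exp_prod Bs = Rep_sq (exp ((1-t) *\<^sub>R a) * (exp Z * exp ((1-t) *\<^sub>R b)))"
    by (simp add: exp_prod_def Bs_def mexp_Rep times_sq.rep_eq)
  also have "\<dots> = mexp A ** mexp B"
    unfolding tz(1)[symmetric] by (simp add: times_sq.rep_eq mexp_Rep[symmetric] RA)
  finally have ep: "exp_prod Bs = mexp A ** mexp B" .
  have sl: "sum_list (map opnorm2 Bs) = (1-t) * norm b + norm Z + (1-t) * norm a"
    using tz(3) by (simp add: Bs_def norm_sq.rep_eq[symmetric])
  let ?S = "{sum_list (map opnorm2 Bs) | Bs. Bs \<noteq> [] \<and> exp_prod Bs = mexp A ** mexp B}"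
  have ne: "Bs \<noteq> []" by (simp add: Bs_def)
  have mem: "sum_list (map opnorm2 Bs) \<in> ?S" using ep ne by blast
  have bdd: "bdd_below ?S"
    by (rule bdd_belowI[of _ 0]) (auto intro!: sum_list_nonneg simp: opnorm2_ge0)
  have "magnus (mexp A ** mexp B) \<le> sum_list (map opnorm2 Bs)"
    unfolding magnus_def by (rule cInf_lower[OF mem bdd])
  also have "\<dots> < opnorm2 A + opnorm2 B" using sl tz(2) na by linarith
  finally show ?thesis .
qed

theorem theorem5p2:
  fixes A B :: "real^'n^'n" and C D :: "complex^'n^'n"
  shows "(opnorm2 (A + B) < opnorm2 A + opnorm2 B
            \<longrightarrow> magnus (mexp A ** mexp B) < opnorm2 A + opnorm2 B)
       \<and> (opnorm2 (C + D) < opnorm2 C + opnorm2 D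
            \<longrightarrow> magnus (mexp C ** mexp D) < opnorm2 C + opnorm2 D)"
  using main_gen[of A B] main_gen[of C D] by blast


end
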